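(* Assume $abcd\neq0$. Let $(\omega_M)_{M\ge1}$ be points of $B_{in}$, let $\theta_M\in(0,\pi)$ be defined by $\cos\theta_M=x(\omega_M)$, and put $\theta'_M=\min\{\theta_M,\pi-\theta_M\}$. If $M\theta'_M\to0$ as $M\to\infty$, then $\displaystyle\lim_{M\to\infty}\frac{\mathcal{E}_M(\omega_M)}{M}=\frac23$.
   Context: Setting: $C=\begin{bmatrix} a&b\\ c&d\end{bmatrix}$ a fixed $2\times2$ unitary matrix, $\Delta=\det C$, a fixed square root $\Delta^{1/2}$; for each $M\ge1$, $\Gamma_M=\{0,\dots,M-1\}$ and $E_M$ is the linear map on $\ell^2(\Gamma_M;\mathbb{C}^2)$ with $(E_M\varphi)(x)=P\varphi(x+1)+Q\varphi(x-1)$, $\varphi(-1)=\varphi(M)=0$, $P=\begin{bmatrix} a&b\\0&0\end{bmatrix}$, $Q=\begin{bmatrix}0&0\\c&d\end{bmatrix}$. For $\omega$ on the unit circle let $z=\Delta^{1/2}\omega$ and let $\varphi$ be the unique solution of $(z-E_M)\varphi=\delta_0|R\rangle$, $|R\rangle=(0,1)^\top$; the energy is $\mathcal{E}_M(\omega)=\sum_{n=0}^{M-1}\|\varphi(n)\|^2_{\mathbb{C}^2}$. Let $x(\omega)=\frac{\omega+\omega^{-1}}{2|a|}$ and $B_{in}=\{\omega:|\omega|=1,\ |x(\omega)|<1\}$. *)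

theory Defs
  imports "HOL-Analysis.Analysis"
begin

text \<open>A 2x2 complex matrix C = [[a,b],[c,d]] with entries C$1$1 = a, C$1$2 = b,
  C$2$1 = c, C$2$2 = d.\<close>

definition unitary2 :: "complex^2^2 \<Rightarrow> bool" where
  "unitary2 C \<longleftrightarrow> C ** (\<chi> i j. cnj (C $ j $ i)) = mat 1"

definition Pmat :: "complex^2^2 \<Rightarrow> complex^2^2" where
  "Pmat C = (\<chi> i j. if i = 1 then C $ 1 $ j else 0)"

definition Qmat :: "complex^2^2 \<Rightarrow> complex^2^2" where
  "Qmat C = (\<chi> i j. if i = 2 then C $ 2 $ j else 0)"

definition Rvec :: "complex^2" where
  "Rvec = (\<chi> i. if i = 2 then 1 else 0)"

text \<open>Elements of \<open>\<ell>\<^sup>2(\<Gamma>_M; \<complex>\<^sup>2)\<close> are represented by functions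
  \<open>nat \<Rightarrow> complex^2\<close>; only values at \<open>0..M-1\<close> matter. The boundary
  convention \<open>\<phi>(-1) = \<phi>(M) = 0\<close> is built in.\<close>

definition Eop :: "complex^2^2 \<Rightarrow> nat \<Rightarrow> (nat \<Rightarrow> complex^2) \<Rightarrow> nat \<Rightarrow> complex^2" where
  "Eop C M \<phi> x =
     (if x + 1 < M then Pmat C *v \<phi> (x + 1) else 0)
   + (if 0 < x \<and> x - 1 < M then Qmat C *v \<phi> (x - 1) else 0)"

definition solves :: "complex^2^2 \<Rightarrow> nat \<Rightarrow> complex \<Rightarrow> (nat \<Rightarrow> complex^2) \<Rightarrow> bool" where
  "solves C M z \<phi> \<longleftrightarrow>
     (\<forall>x. M \<le> x \<longrightarrow> \<phi> x = 0) \<and>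
     (\<forall>x<M. z *s \<phi> x - Eop C M \<phi> x = (if x = 0 then Rvec else 0))"

definition sol :: "complex^2^2 \<Rightarrow> nat \<Rightarrow> complex \<Rightarrow> nat \<Rightarrow> complex^2" where
  "sol C M z = (THE \<phi>. solves C M z \<phi>)"

text \<open>Energy \<open>\<E>_M(\<omega>)\<close>, with \<open>z = \<Delta>^{1/2} \<omega>\<close> and \<open>sq\<close> the fixed square root of det C.\<close>
definition energy :: "complex^2^2 \<Rightarrow> complex \<Rightarrow> nat \<Rightarrow> complex \<Rightarrow> real" where
  "energy C sq M \<omega> = (\<Sum>n<M. (norm (sol C M (sq * \<omega>) n))\<^sup>2)"

definition xfun :: "complex^2^2 \<Rightarrow> complex \<Rightarrow> complex" where
  "xfun C \<omega> = (\<omega> + inverse \<omega>) / (2 * of_real (cmod (C $ 1 $ 1)))"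

definition B_in :: "complex^2^2 \<Rightarrow> complex set" where
  "B_in C = {\<omega>. cmod \<omega> = 1 \<and> cmod (xfun C \<omega>) < 1}"

end

theory Submission
  imports Defs "HOL-Real_Asymp.Real_Asymp"
begin


lemma unitary_facts:
  assumes "unitary2 C"
  shows "C$1$1 * cnj (C$1$1) + C$1$2 * cnj (C$1$2) = 1"
    "C$2$1 * cnj (C$1$1) + C$2$2 * cnj (C$1$2) = 0"
    "C$2$1 * cnj (C$2$1) + C$2$2 * cnj (C$2$2) = 1"
proof -
  have e: "\<And>i j. (C ** (\<chi> i j. cnj (C $ j $ i))) $ i $ j = mat 1 $ i $ j"
    using assms unfolding unitary2_def by simp
  show "C$1$1 * cnj (C$1$1) + C$1$2 * cnj (C$1$2) = 1"
    using e[of 1 1] by (simp add: matrix_matrix_mult_def sum_2 mat_def)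
  show "C$2$1 * cnj (C$1$1) + C$2$2 * cnj (C$1$2) = 0"
    using e[of 2 1] by (simp add: matrix_matrix_mult_def sum_2 mat_def)
  show "C$2$1 * cnj (C$2$1) + C$2$2 * cnj (C$2$2) = 1"
    using e[of 2 2] by (simp add: matrix_matrix_mult_def sum_2 mat_def)
qed

lemma unitary_derived:
  fixes a b c d \<Delta> :: complex
  assumes h1: "a * cnj a + b * cnj b = 1" and h2: "c * cnj a + d * cnj b = 0"
    and h3: "c * cnj c + d * cnj d = 1" and D: "\<Delta> = a*d - b*c"
  shows "d = \<Delta> * cnj a" "c = - \<Delta> * cnj b" "cmod \<Delta> = 1"
proof -
  have ca: "c * cnj a = - (d * cnj b)" using h2 by (simp add: eq_neg_iff_add_eq_0)
  show d: "d = \<Delta> * cnj a"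
  proof -
    have "\<Delta> * cnj a = d * (a * cnj a) - b * (c * cnj a)" by (simp add: D algebra_simps)
    also have "\<dots> = d * (a * cnj a + b * cnj b)" unfolding ca by (simp add: algebra_simps)
    also have "\<dots> = d" using h1 by simp
    finally show ?thesis by simp
  qed
  show c: "c = - \<Delta> * cnj b"
  proof -
    have "- \<Delta> * cnj b = - a * (d * cnj b) + c * (b * cnj b)" by (simp add: D algebra_simps)
    also have "\<dots> = - a * (c * cnj a + d * cnj b) + c * (a * cnj a + b * cnj b)" by (simp add: algebra_simps)
    also have "\<dots> = c" using h1 h2 by simp
    finally show ?thesis by simp
  qed
  have "\<Delta> * cnj \<Delta> * (a * cnj a + b * cnj b) = 1"
    using h3 unfolding c d by (simp add: algebra_simps)
  then have "\<Delta> * cnj \<Delta> = 1" using h1 by simp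
  then have "complex_of_real ((cmod \<Delta>)^2) = 1" by (simp add: complex_norm_square del: of_real_power)
  then have "(cmod \<Delta>)^2 = 1" by (metis of_real_eq_1_iff)
  then show "cmod \<Delta> = 1" by (metis norm_ge_zero power2_eq_1_iff abs_of_nonneg abs_minus_cancel abs_one)
qed


definition Vs :: "real \<Rightarrow> nat \<Rightarrow> real" where
  "Vs \<theta> k = sin (real k * \<theta>) / sin \<theta>"

lemma Vs_0[simp]: "Vs \<theta> 0 = 0" by (simp add: Vs_def)
lemma Vs_1: "sin \<theta> \<noteq> 0 \<Longrightarrow> Vs \<theta> 1 = 1" by (simp add: Vs_def)
lemma Vs_rec: "Vs \<theta> (Suc (Suc k)) = 2 * cos \<theta> * Vs \<theta> (Suc k) - Vs \<theta> k"
proof -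
  define A where "A = real (Suc k) * \<theta>"
  have 1: "real (Suc (Suc k)) * \<theta> = A + \<theta>" by (simp add: A_def algebra_simps)
  have 2: "real k * \<theta> = A - \<theta>" by (simp add: A_def algebra_simps)
  have "sin (A + \<theta>) + sin (A - \<theta>) = 2 * cos \<theta> * sin A"
    by (simp only: sin_add sin_diff) (simp add: algebra_simps)
  then have "sin (real (Suc (Suc k)) * \<theta>) = 2 * cos \<theta> * sin (real (Suc k) * \<theta>) - sin (real k * \<theta>)"
    unfolding 1 2 A_def[symmetric] by linarith
  then show ?thesis by (simp add: Vs_def diff_divide_distrib)
qed

lemma Eop_comp:
  "(Eop C M \<psi> x)$1 = (if x + 1 < M then C$1$1 * \<psi> (x+1)$1 + C$1$2 * \<psi> (x+1)$2 else 0)"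
  "(Eop C M \<psi> x)$2 = (if 0 < x \<and> x - 1 < M then C$2$1 * \<psi> (x-1)$1 + C$2$2 * \<psi> (x-1)$2 else 0)"
  by (auto simp: Eop_def Pmat_def Qmat_def matrix_vector_mult_def sum_2)

lemma solves_pt:
  assumes "x < M"
  shows "(z *s \<psi> x - Eop C M \<psi> x = (if x = 0 then Rvec else 0)) \<longleftrightarrow>
     (z * \<psi> x $ 1 = (if x + 1 < M then C$1$1 * \<psi> (x+1)$1 + C$1$2 * \<psi> (x+1)$2 else 0) \<and>
      z * \<psi> x $ 2 = (if 0 < x then C$2$1 * \<psi> (x-1)$1 + C$2$2 * \<psi> (x-1)$2 else 1))"
  using assms less_imp_diff_less[OF assms, of 1] unfolding vec_eq_iff forall_2
  by (cases "x + 1 < M"; cases "x = 0"; simp add: Eop_comp Rvec_def)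

lemma solves_iff:
  "solves C M z \<psi> \<longleftrightarrow> (\<forall>x. M \<le> x \<longrightarrow> \<psi> x = 0) \<and>
     (\<forall>n<M. z * \<psi> n $ 1 = (if n + 1 < M then C$1$1 * \<psi> (n+1)$1 + C$1$2 * \<psi> (n+1)$2 else 0) \<and>
      z * \<psi> n $ 2 = (if 0 < n then C$2$1 * \<psi> (n-1)$1 + C$2$2 * \<psi> (n-1)$2 else 1))"
  unfolding solves_def using solves_pt by blast



lemma norm_vec2_sq: "(norm (v::complex^2))^2 = (cmod (v$1))^2 + (cmod (v$2))^2"
  unfolding norm_vec_def L2_set_def sum_2 by simp

lemma backward_unique:
  fixes a b c d z :: complex and \<psi> e :: "nat \<Rightarrow> complex^2"
  assumes z: "z \<noteq> 0" and d: "d \<noteq> 0" and M: "0 < M"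
    and p1: "\<forall>n<M. z * \<psi> n $ 1 = (if n + 1 < M then a * \<psi> (n+1)$1 + b * \<psi> (n+1)$2 else 0)"
    and e1: "\<forall>n<M. z * e n $ 1 = (if n + 1 < M then a * e (n+1)$1 + b * e (n+1)$2 else 0)"
    and p2: "\<forall>n. 0 < n \<and> n < M \<longrightarrow> z * \<psi> n $ 2 = c * \<psi> (n-1)$1 + d * \<psi> (n-1)$2"
    and e2: "\<forall>n. 0 < n \<and> n < M \<longrightarrow> z * e n $ 2 = c * e (n-1)$1 + d * e (n-1)$2"
    and top: "\<psi> (M-1) $ 2 = e (M-1) $ 2"
  shows "\<forall>n<M. \<psi> n = e n"
proof -
  have "k < M \<longrightarrow> \<psi> (M-1-k) = e (M-1-k)" for k
  proof (induction k)
    case 0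
    have "z * \<psi> (M-1) $ 1 = 0" using p1 M by (auto elim!: allE[of _ "M-1"])
    moreover have "z * e (M-1) $ 1 = 0" using e1 M by (auto elim!: allE[of _ "M-1"])
    ultimately have "\<psi> (M-1) $ 1 = e (M-1) $ 1" using z by simp
    then show ?case using top by (simp add: vec_eq_iff forall_2)
  next
    case (Suc k)
    show ?case
    proof
      assume k: "Suc k < M"
      define n where "n = M - 1 - Suc k"
      have n1: "n + 1 = M - 1 - k" "n + 1 < M" "n < M" using k by (auto simp: n_def)
      have IH: "\<psi> (n+1) = e (n+1)" using Suc.IH k n1 by simp
      have "z * \<psi> n $ 1 = a * \<psi> (n+1)$1 + b * \<psi> (n+1)$2" using p1 n1 by auto
      moreover have "z * e n $ 1 = a * e (n+1)$1 + b * e (n+1)$2" using e1 n1 by auto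
      ultimately have "z * \<psi> n $ 1 = z * e n $ 1" using IH by simp
      then have q1: "\<psi> n $ 1 = e n $ 1" using z by simp
      have "z * \<psi> (n+1) $ 2 = c * \<psi> n $1 + d * \<psi> n $ 2" using p2[rule_format, of "n+1"] n1 by simp
      moreover have "z * e (n+1) $ 2 = c * e n $1 + d * e n $ 2" using e2[rule_format, of "n+1"] n1 by simp
      ultimately have "d * \<psi> n $ 2 = d * e n $ 2" using IH q1 by (metis add_left_cancel)
      then have "\<psi> n $ 2 = e n $ 2" using d by simp
      then show "\<psi> (M - 1 - Suc k) = e (M - 1 - Suc k)" using q1 by (simp add: vec_eq_iff forall_2 n_def)
    qed
  qed
  note K = this
  show ?thesis
  proof (intro allI impI)
    fix n assume "n < M"
    then have "M - 1 - n < M" "M - 1 - (M - 1 - n) = n" by auto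
    then show "\<psi> n = e n" using K[of "M - 1 - n"] by simp
  qed
qed

lemma core2:
  fixes \<Delta> \<omega> \<rho> V0 V1 cth :: complex
  assumes "2 * \<rho> * cth * \<omega> = \<omega>^2 + 1"
  shows "\<Delta> * \<omega> * \<rho> * (\<omega> * V1 - \<rho> * V0) =
     (- \<Delta> * (1 - \<rho>^2)) * \<rho> * V1 + (\<Delta> * \<rho>^2) * (\<omega> * (2 * cth * V1 - V0) - \<rho> * V1)"
proof -
  have "(- \<Delta> * (1 - \<rho>^2)) * \<rho> * V1 + (\<Delta> * \<rho>^2) * (\<omega> * (2 * cth * V1 - V0) - \<rho> * V1)
     - \<Delta> * \<omega> * \<rho> * (\<omega> * V1 - \<rho> * V0) = \<Delta> * \<rho> * V1 * (2 * \<rho> * cth * \<omega> - (\<omega>^2 + 1))"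
    by (simp add: algebra_simps power2_eq_square)
  then show ?thesis using assms by simp
qed



locale wsetup =
  fixes C :: "complex^2^2" and sq \<omega> :: complex and \<theta> :: real
  assumes unitary: "unitary2 C" and sqrt: "sq\<^sup>2 = det C"
    and nonzero: "C$1$1 * C$1$2 * C$2$1 * C$2$2 \<noteq> 0"
    and om1: "cmod \<omega> = 1" and thc: "complex_of_real (cos \<theta>) = xfun C \<omega>"
    and sinth: "sin \<theta> \<noteq> 0"
begin

abbreviation "a \<equiv> C$1$1"
abbreviation "b \<equiv> C$1$2"
abbreviation "c \<equiv> C$2$1"
abbreviation "d \<equiv> C$2$2"
definition "rho = cmod a"
definition "lam = sq * cnj a / of_real rho"
definition "z = sq * \<omega>"

lemma nz: "a \<noteq> 0" "b \<noteq> 0" "c \<noteq> 0" "d \<noteq> 0" using nonzero by auto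

lemma rho_pos: "rho > 0" using nz by (simp add: rho_def)

lemma dc: "d = det C * cnj a" "c = - det C * cnj b" "cmod (det C) = 1"
  using unitary_derived[OF unitary_facts[OF unitary] det_2] by auto

lemma aa: "a * cnj a = of_real (rho^2)"
  by (metis complex_norm_square rho_def)

lemma bb: "b * cnj b = 1 - of_real (rho^2)"
  using unitary_facts(1)[OF unitary] aa by (simp add: algebra_simps)

lemma bnorm: "(cmod b)^2 = 1 - rho^2"
proof -
  have "complex_of_real ((cmod b)^2) = complex_of_real (1 - rho^2)"
    using bb by (simp add: complex_norm_square del: of_real_power)
  then show ?thesis by (metis of_real_eq_iff)
qed

lemma rho_lt1: "rho < 1"
proof -
  have "(cmod b)^2 > 0" using nz by simp
  then have "rho^2 < 1" using bnorm by simp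
  then show ?thesis using rho_pos by (simp add: power2_less_eq_zero_iff abs_square_less_1)
qed

lemma sq_norm: "cmod sq = 1"
proof -
  have "cmod (sq^2) = 1" using sqrt dc(3) by simp
  then have "(cmod sq)^2 = 1" by (simp add: norm_power)
  then show ?thesis by (simp add: power2_eq_1_iff) (metis norm_ge_zero abs_of_nonneg abs_minus_cancel abs_one power2_eq_1_iff)
qed

lemma z_norm: "cmod z = 1" using sq_norm om1 by (simp add: z_def norm_mult)
lemma z_nz: "z \<noteq> 0" using z_norm by auto
lemma lam_norm: "cmod lam = 1"
  using sq_norm rho_pos by (simp add: lam_def norm_mult norm_divide rho_def)
lemma om_nz: "\<omega> \<noteq> 0" using om1 by auto

lemma lam_a: "lam * a = sq * of_real rho"
proof -
  have "lam * a = sq * (a * cnj a) / of_real rho" by (simp add: lam_def algebra_simps)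
  also have "\<dots> = sq * of_real rho" using rho_pos by (simp add: aa power2_eq_square)
  finally show ?thesis .
qed

lemma omsum: "\<omega> + inverse \<omega> = 2 * of_real rho * of_real (cos \<theta>)"
  using thc rho_pos by (simp add: xfun_def rho_def field_simps)

lemma omsq: "2 * of_real rho * of_real (cos \<theta>) * \<omega> = \<omega>^2 + 1"
proof -
  have "(\<omega> + inverse \<omega>) * \<omega> = \<omega>^2 + 1" using om_nz by (simp add: field_simps power2_eq_square)
  then show ?thesis using omsum by simp
qed

lemma Re_om: "Re \<omega> = rho * cos \<theta>"
proof -
  have n: "(Re \<omega>)^2 + (Im \<omega>)^2 = 1" using om1 cmod_power2[of \<omega>] by simp
  have "Re (\<omega> + inverse \<omega>) = 2 * rho * cos \<theta>" using omsum by simp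
  moreover have "Re (inverse \<omega>) = Re \<omega>" using n by (simp add: power2_eq_square)
  ultimately show ?thesis by simp
qed

lemma norm_lin: "(cmod (\<omega> * of_real u - of_real (rho * w)))^2 = u^2 + rho^2 * w^2 - 2 * rho^2 * cos \<theta> * u * w"
proof -
  have n: "(Re \<omega>)^2 + (Im \<omega>)^2 = 1" using om1 cmod_power2[of \<omega>] by simp
  have "(cmod (\<omega> * of_real u - of_real (rho * w)))^2 = (Re \<omega> * u - rho * w)^2 + (Im \<omega> * u)^2"
    by (simp add: cmod_power2)
  also have "\<dots> = ((Re \<omega>)^2 + (Im \<omega>)^2) * u^2 - 2 * rho * Re \<omega> * u * w + rho^2 * w^2"
    by (simp add: algebra_simps power2_eq_square)
  also have "\<dots> = u^2 - 2 * rho * Re \<omega> * u * w + rho^2 * w^2"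
    by (simp only: n mult_1)
  also have "\<dots> = u^2 + rho^2 * w^2 - 2 * rho^2 * cos \<theta> * u * w"
    by (simp add: Re_om algebra_simps power2_eq_square)
  finally show ?thesis .
qed

definition ex :: "nat \<Rightarrow> complex \<Rightarrow> nat \<Rightarrow> complex^2" where
  "ex M K n = vector [K * lam^n * b * of_real rho * of_real (Vs \<theta> (M-1-n)),
                      K * lam^n * a * (\<omega> * of_real (Vs \<theta> (M-n)) - of_real (rho * Vs \<theta> (M-1-n)))]"

lemma ex_hom1:
  assumes "n < M"
  shows "z * ex M K n $ 1 = (if n + 1 < M then a * ex M K (n+1) $ 1 + b * ex M K (n+1) $ 2 else 0)"
proof (cases "n + 1 < M")
  case True
  define j where "j = M - 2 - n"
  have j: "M - 1 - n = Suc j" "M - 1 - (n+1) = j" "M - (n+1) = Suc j"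
    using True unfolding j_def by arith+
  let ?V = "of_real (Vs \<theta> (Suc j)) :: complex" and ?W = "of_real (Vs \<theta> j) :: complex"
  have "a * ex M K (n+1) $ 1 + b * ex M K (n+1) $ 2
      = a * (K * lam^(n+1) * b * of_real rho * ?W) + b * (K * lam^(n+1) * a * (\<omega> * ?V - of_real rho * ?W))"
    unfolding ex_def j by simp
  also have "\<dots> = K * lam^n * (lam * a) * b * \<omega> * ?V" by (simp add: algebra_simps)
  also have "\<dots> = z * (K * lam^n * b * of_real rho * ?V)" unfolding lam_a z_def by (simp add: algebra_simps)
  also have "\<dots> = z * ex M K n $ 1" unfolding ex_def j by simp
  finally show ?thesis using True by simp
next
  case False
  then have "M - 1 - n = 0" using assms by simp
  then show ?thesis using False by (simp add: ex_def)
qed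

lemma ex_hom2:
  assumes "0 < n" "n < M"
  shows "z * ex M K n $ 2 = c * ex M K (n-1) $ 1 + d * ex M K (n-1) $ 2"
proof -
  obtain m where m: "n = Suc m" using assms by (cases n) auto
  define k where "k = M - 1 - n"
  have k: "M - 1 - n = k" "M - n = Suc k" "M - 1 - m = Suc k" "M - m = Suc (Suc k)"
    using assms m unfolding k_def by arith+
  have k2: "M - Suc m = Suc k" using k(3) by simp
  let ?V0 = "of_real (Vs \<theta> k) :: complex" and ?V1 = "of_real (Vs \<theta> (Suc k)) :: complex"
    and ?V2 = "of_real (Vs \<theta> (Suc (Suc k))) :: complex" and ?r = "of_real rho :: complex"
    and ?ct = "of_real (cos \<theta>) :: complex"
  have V2: "?V2 = 2 * ?ct * ?V1 - ?V0" by (simp add: Vs_rec)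
  have zla: "z * lam * a = det C * \<omega> * ?r"
  proof -
    have "z * lam * a = sq * \<omega> * (lam * a)" by (simp add: z_def algebra_simps)
    also have "\<dots> = sq^2 * \<omega> * ?r" unfolding lam_a by (simp add: power2_eq_square algebra_simps)
    finally show ?thesis using sqrt by simp
  qed
  have "c * b = - det C * (b * cnj b)" by (subst dc(2)) (simp add: algebra_simps)
  then have cb: "c * b = - det C * (1 - ?r^2)" unfolding bb by simp
  have da: "d * a = det C * ?r^2" using dc(1) aa by (simp add: algebra_simps)
  have "z * ex M K n $ 2 = K * lam^m * ((z * lam * a) * (\<omega> * ?V1 - ?r * ?V0))"
    unfolding ex_def m k[unfolded m] by (simp add: algebra_simps)
  also have "\<dots> = K * lam^m * ((- det C * (1 - ?r^2)) * ?r * ?V1 + (det C * ?r^2) * (\<omega> * (2 * ?ct * ?V1 - ?V0) - ?r * ?V1))"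
    by (simp only: zla core2[OF omsq])
  also have "\<dots> = K * lam^m * ((c * b) * ?r * ?V1 + (d * a) * (\<omega> * ?V2 - ?r * ?V1))"
    unfolding cb da V2 by simp
  also have "\<dots> = c * ex M K (n-1) $ 1 + d * ex M K (n-1) $ 2"
    unfolding ex_def m by (simp add: k2 k(4) algebra_simps)
  finally show ?thesis .
qed

definition "Dq M = (Vs \<theta> M)^2 + rho^2 * (Vs \<theta> (M-1))^2 - 2 * rho^2 * cos \<theta> * Vs \<theta> M * Vs \<theta> (M-1)"
definition "Nq k = (Vs \<theta> k)^2 + (Vs \<theta> (Suc k))^2 - 2 * rho^2 * cos \<theta> * Vs \<theta> k * Vs \<theta> (Suc k)"
definition "den M = \<omega> * of_real (Vs \<theta> M) - of_real (rho * Vs \<theta> (M-1))"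
definition "K0 M = 1 / (z * a * den M)"
definition "phi M n = (if n < M then ex M (K0 M) n else 0)"

lemma den_sq: "(cmod (den M))^2 = Dq M"
  unfolding den_def Dq_def norm_lin by simp

lemma den_nz: "Dq M > 0 \<Longrightarrow> den M \<noteq> 0"
  using den_sq[of M] by auto

lemma ex_top2: "0 < M \<Longrightarrow> z * ex M K 0 $ 2 = z * K * a * den M"
  by (simp add: ex_def den_def algebra_simps)

lemma ex_last2: "0 < M \<Longrightarrow> ex M K (M-1) $ 2 = K * lam^(M-1) * a * \<omega>"
proof -
  assume M: "0 < M"
  then obtain m where m: "M = Suc m" by (cases M) auto
  have "Vs \<theta> (Suc 0) = 1" using Vs_1[OF sinth] by simp
  then show ?thesis by (simp add: ex_def m)
qed

lemma phi_solves:
  assumes M: "0 < M" and D: "Dq M > 0"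
  shows "solves C M z (phi M)"
  unfolding solves_iff
proof (intro conjI allI impI)
  fix x assume "M \<le> x" then show "phi M x = 0" by (simp add: phi_def)
next
  fix n assume n: "n < M"
  show "z * phi M n $ 1 = (if n + 1 < M then a * phi M (n+1) $ 1 + b * phi M (n+1) $ 2 else 0)"
    using ex_hom1[OF n, of "K0 M"] n by (simp add: phi_def)
  show "z * phi M n $ 2 = (if 0 < n then c * phi M (n-1) $ 1 + d * phi M (n-1) $ 2 else 1)"
  proof (cases "0 < n")
    case True
    then show ?thesis using ex_hom2[OF True n, of "K0 M"] n by (simp add: phi_def)
  next
    case False
    then have "n = 0" by simp
    then show ?thesis using ex_top2[OF M, of "K0 M"] M den_nz[OF D] z_nz nz
      by (simp add: phi_def K0_def)
  qed
qed

lemma sol_eq: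
  assumes M: "0 < M" and D: "Dq M > 0"
  shows "sol C M z = phi M"
  unfolding sol_def
proof (rule the_equality)
  show "solves C M z (phi M)" by (rule phi_solves[OF M D])
next
  fix \<psi> assume "solves C M z \<psi>"
  note S = this[unfolded solves_iff]
  define \<kappa> where "\<kappa> = \<psi> (M-1) $ 2 / (lam^(M-1) * a * \<omega>)"
  have lnz: "lam \<noteq> 0" using lam_norm by auto
  have top: "\<psi> (M-1) $ 2 = ex M \<kappa> (M-1) $ 2"
    using ex_last2[OF M, of \<kappa>] lnz nz om_nz by (simp add: \<kappa>_def)
  have h1: "\<forall>n<M. z * \<psi> n $ 1 = (if n + 1 < M then a * \<psi> (n+1)$1 + b * \<psi> (n+1)$2 else 0)"
    using S by blast
  have h2: "\<forall>n<M. z * ex M \<kappa> n $ 1 = (if n + 1 < M then a * ex M \<kappa> (n+1)$1 + b * ex M \<kappa> (n+1)$2 else 0)"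
    using ex_hom1 by blast
  have h3: "\<forall>n. 0 < n \<and> n < M \<longrightarrow> z * \<psi> n $ 2 = c * \<psi> (n-1)$1 + d * \<psi> (n-1)$2"
    using S by auto
  have h4: "\<forall>n. 0 < n \<and> n < M \<longrightarrow> z * ex M \<kappa> n $ 2 = c * ex M \<kappa> (n-1)$1 + d * ex M \<kappa> (n-1)$2"
    using ex_hom2 by blast
  have eq: "\<forall>n<M. \<psi> n = ex M \<kappa> n"
    by (rule backward_unique[OF z_nz nz(4) M h1 h2 h3 h4 top])
  have "z * \<psi> 0 $ 2 = 1" using S M by auto
  then have "z * \<kappa> * a * den M = 1" using eq M ex_top2[OF M, of \<kappa>] by simp
  then have k: "\<kappa> = K0 M" unfolding K0_def using den_nz[OF D] z_nz nz by (simp add: field_simps)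
  show "\<psi> = phi M"
  proof
    fix n show "\<psi> n = phi M n"
      using eq S k by (cases "n < M") (auto simp: phi_def)
  qed
qed

lemma ex_norm:
  assumes n: "n < M" and D: "Dq M > 0"
  shows "(norm (ex M (K0 M) n))^2 = Nq (M-1-n) / Dq M"
proof -
  define k where "k = M - 1 - n"
  have k: "M - n = Suc k" using n by (simp add: k_def)
  have lp: "cmod (lam^n) = 1" using lam_norm by (simp add: norm_power)
  have ca: "cmod a = rho" by (simp add: rho_def)
  have K: "(cmod (K0 M))^2 = 1 / (rho^2 * Dq M)"
  proof -
    have "cmod (K0 M) = 1 / (rho * cmod (den M))"
      using z_norm by (simp add: K0_def norm_divide norm_mult ca)
    then have "(cmod (K0 M))^2 = 1 / (rho^2 * (cmod (den M))^2)" by (simp add: power2_eq_square)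
    then show ?thesis by (simp add: den_sq)
  qed
  have e1: "(cmod (ex M (K0 M) n $ 1))^2 = (cmod (K0 M))^2 * (1 - rho^2) * rho^2 * (Vs \<theta> k)^2"
    unfolding ex_def k_def[symmetric] using rho_pos
    by (simp add: norm_mult lp power_mult_distrib bnorm)
  have e2: "(cmod (ex M (K0 M) n $ 2))^2 = (cmod (K0 M))^2 * rho^2 *
      ((Vs \<theta> (Suc k))^2 + rho^2 * (Vs \<theta> k)^2 - 2 * rho^2 * cos \<theta> * Vs \<theta> (Suc k) * Vs \<theta> k)"
    unfolding ex_def k_def[symmetric] k using norm_lin[of "Vs \<theta> (Suc k)" "Vs \<theta> k"]
    by (simp add: norm_mult lp power_mult_distrib ca)
  have "(norm (ex M (K0 M) n))^2 = (cmod (K0 M))^2 * rho^2 * Nq k"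
    unfolding norm_vec2_sq e1 e2 Nq_def by (simp add: algebra_simps)
  also have "\<dots> = Nq k / Dq M" using rho_pos unfolding K by simp
  finally show ?thesis by (simp add: k_def)
qed

lemma energy_eq:
  assumes M: "0 < M" and D: "Dq M > 0"
  shows "energy C sq M \<omega> = (\<Sum>k<M. Nq k) / Dq M"
proof -
  have "energy C sq M \<omega> = (\<Sum>n<M. Nq (M-1-n) / Dq M)"
    unfolding energy_def z_def[symmetric] sol_eq[OF M D]
    by (rule sum.cong) (simp_all add: phi_def ex_norm[OF _ D])
  also have "\<dots> = (\<Sum>k<M. Nq k / Dq M)"
    by (rule sum.reindex_bij_witness[where i="\<lambda>k. M - 1 - k" and j="\<lambda>k. M - 1 - k"]) auto
  also have "\<dots> = (\<Sum>k<M. Nq k) / Dq M" by (simp add: sum_divide_distrib)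
  finally show ?thesis .
qed

end


lemma abs_sin_nat_le: "\<bar>sin (real k * t)\<bar> \<le> real k * \<bar>sin t\<bar>"
proof (induction k)
  case 0 then show ?case by simp
next
  case (Suc k)
  have "sin (real (Suc k) * t) = sin (real k * t) * cos t + cos (real k * t) * sin t"
    by (simp add: distrib_right sin_add)
  then have "\<bar>sin (real (Suc k) * t)\<bar> \<le> \<bar>sin (real k * t)\<bar> * \<bar>cos t\<bar> + \<bar>cos (real k * t)\<bar> * \<bar>sin t\<bar>"
    by (metis abs_mult abs_triangle_ineq)
  also have "\<dots> \<le> \<bar>sin (real k * t)\<bar> + \<bar>sin t\<bar>"
    by (intro add_mono) (auto intro: mult_left_le mult_left_le_one_le simp: abs_cos_le_one abs_mult)
  also have "\<dots> \<le> real (Suc k) * \<bar>sin t\<bar>" using Suc.IH by (simp add: algebra_simps)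
  finally show ?case .
qed

lemma sin_cubic_lower: "(y::real) \<ge> 0 \<Longrightarrow> sin y \<ge> y - y^3 / 6"
proof -
  assume y: "y \<ge> 0"
  have b: "\<bar>sin y - (\<Sum>m<3. sin_coeff m * y ^ m)\<bar> \<le> inverse (fact 3) * \<bar>y\<bar> ^ 3"
    by (rule Maclaurin_sin_bound)
  have s: "(\<Sum>m<3. sin_coeff m * y ^ m) = y"
    by (simp add: lessThan_nat_numeral sin_coeff_def)
  have f: "(fact 3 :: real) = 6" by (simp add: eval_nat_numeral)
  have a: "\<bar>y\<bar> = y" using y by simp
  have "\<bar>sin y - y\<bar> \<le> inverse 6 * y ^ 3" using b unfolding s f a .
  moreover have "inverse 6 * y ^ 3 = y^3 / 6" by (metis divide_inverse mult.commute)
  ultimately have "\<bar>sin y - y\<bar> \<le> y ^ 3 / 6" by simp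
  then have "- (sin y - y) \<le> y ^ 3 / 6" by (rule abs_le_D2)
  then show ?thesis by linarith
qed
lemma Vs_upper:
  assumes "0 < t" "t < pi"
  shows "\<bar>Vs t k\<bar> \<le> real k"
proof -
  have s: "sin t > 0" using assms by (simp add: sin_gt_zero)
  show ?thesis using abs_sin_nat_le[of k t] s
    by (simp add: Vs_def abs_divide divide_le_eq)
qed

lemma Vs_lower:
  assumes t: "0 < t" "t < pi" and kt: "real k * t \<le> 1"
  shows "Vs t k \<ge> real k * (1 - (real k * t)^2 / 6)"
proof -
  have s: "sin t > 0" using t by (simp add: sin_gt_zero)
  have st: "sin t \<le> t" using t sin_x_le_x by simp
  let ?y = "real k * t"
  have y0: "?y \<ge> 0" using t by simp
  have "?y^3 \<le> ?y * 1" using y0 kt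
    by (metis power3_eq_cube mult.assoc mult_left_mono mult_le_one zero_le_mult_iff)
  then have low0: "?y - ?y^3/6 \<ge> 0" using y0 by linarith
  have sl: "sin ?y \<ge> ?y - ?y^3/6" by (rule sin_cubic_lower[OF y0])
  have "real k * (1 - ?y^2 / 6) = (?y - ?y^3/6) / t" using t
    by (simp add: field_simps power2_eq_square power3_eq_cube)
  also have "\<dots> \<le> sin ?y / t" using sl t by (intro divide_right_mono) auto
  also have "\<dots> \<le> sin ?y / sin t"
  proof (rule divide_left_mono)
    show "sin t \<le> t" by (rule st)
    show "0 \<le> sin ?y" using sl low0 by linarith
    show "0 < t * sin t" using s t by simp
  qed
  finally show ?thesis unfolding Vs_def .
qed

lemma Vs_reflect: "Vs (pi - t) k = - ((-1)^k * Vs t k)"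
proof -
  have "sin (real k * (pi - t)) = sin (real k * pi - real k * t)" by (simp add: algebra_simps)
  also have "\<dots> = - ((-1)^k * sin (real k * t))" by (simp only: sin_diff sin_npi cos_npi mult_zero_left diff_0)
  finally show ?thesis by (simp add: Vs_def)
qed

definition NN :: "real \<Rightarrow> real \<Rightarrow> nat \<Rightarrow> real" where
  "NN \<rho> t k = (Vs t k)^2 + (Vs t (Suc k))^2 - 2 * \<rho>^2 * cos t * Vs t k * Vs t (Suc k)"
definition DD :: "real \<Rightarrow> real \<Rightarrow> nat \<Rightarrow> real" where
  "DD \<rho> t M = (Vs t M)^2 + \<rho>^2 * (Vs t (M-1))^2 - 2 * \<rho>^2 * cos t * Vs t M * Vs t (M-1)"

lemma sign_prod: "((-1::real)^k * x) * ((-1)^(Suc k) * y) = - (x * y)" "((-1::real)^k * x)^2 = x^2"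
  by (cases "even k"; simp add: power2_eq_square)+

lemma NN_reflect: "NN \<rho> (pi - t) k = NN \<rho> t k"
proof -
  have "Vs (pi - t) k * Vs (pi - t) (Suc k) = - (Vs t k * Vs t (Suc k))"
    unfolding Vs_reflect using sign_prod(1)[of k "Vs t k" "Vs t (Suc k)"] by simp
  moreover have "(Vs (pi - t) j)^2 = (Vs t j)^2" for j
    unfolding Vs_reflect using sign_prod(2)[of j] by simp
  ultimately show ?thesis unfolding NN_def by (simp add: mult.assoc)
qed

lemma DD_reflect: "DD \<rho> (pi - t) M = DD \<rho> t M"
proof (cases M)
  case 0 then show ?thesis by (simp add: DD_def)
next
  case (Suc m)
  have "Vs (pi - t) (Suc m) * Vs (pi - t) m = - (Vs t (Suc m) * Vs t m)"
    unfolding Vs_reflect using sign_prod(1)[of m "Vs t m" "Vs t (Suc m)"] by (simp add: mult.commute)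
  moreover have "(Vs (pi - t) j)^2 = (Vs t j)^2" for j
    unfolding Vs_reflect using sign_prod(2)[of j] by simp
  ultimately show ?thesis unfolding DD_def Suc by (simp add: mult.assoc)
qed

lemma quad_bounds:
  fixes v w p q \<alpha> r e :: real
  assumes "0 \<le> e" "e \<le> 1" "0 \<le> r" "0 \<le> \<alpha>" "0 \<le> p" "0 \<le> q"
    "p * (1 - e) \<le> v" "v \<le> p" "q * (1 - e) \<le> w" "w \<le> q"
  shows "v^2 + \<alpha> * w^2 - 2 * r * v * w \<le> p^2 + \<alpha> * q^2 - 2 * r * (1 - e)^2 * p * q"
    and "(1 - e)^2 * (p^2 + \<alpha> * q^2) - 2 * r * p * q \<le> v^2 + \<alpha> * w^2 - 2 * r * v * w"
proof -
  have p1: "0 \<le> p * (1 - e)" "0 \<le> q * (1 - e)" using assms by simp_all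
  have v0: "0 \<le> v" "0 \<le> w" using assms p1 by linarith+
  have a1: "v^2 \<le> p^2" using assms v0 by (simp add: power_mono)
  have a2: "w^2 \<le> q^2" using assms v0 by (simp add: power_mono)
  have a3: "(p * (1 - e))^2 \<le> v^2" using assms p1 by (simp add: power_mono)
  have a4: "(q * (1 - e))^2 \<le> w^2" using assms p1 by (simp add: power_mono)
  have a5: "(p * (1 - e)) * (q * (1 - e)) \<le> v * w" using assms p1 by (intro mult_mono) auto
  have a6: "v * w \<le> p * q" using assms v0 by (intro mult_mono) auto
  have b2: "\<alpha> * w^2 \<le> \<alpha> * q^2" using a2 assms by (simp add: mult_left_mono)
  have b4: "\<alpha> * (q * (1 - e))^2 \<le> \<alpha> * w^2" using a4 assms by (simp add: mult_left_mono)
  have b5: "r * ((p * (1 - e)) * (q * (1 - e))) \<le> r * (v * w)" using a5 assms by (simp add: mult_left_mono)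
  have b6: "r * (v * w) \<le> r * (p * q)" using a6 assms by (simp add: mult_left_mono)
  have e1: "2 * r * (1 - e)^2 * p * q = 2 * (r * ((p * (1 - e)) * (q * (1 - e))))" by (simp add: power2_eq_square algebra_simps)
  have e2: "2 * r * v * w = 2 * (r * (v * w))" by simp
  have e3: "2 * r * p * q = 2 * (r * (p * q))" by simp
  have e4: "(1 - e)^2 * (p^2 + \<alpha> * q^2) = (p * (1 - e))^2 + \<alpha> * (q * (1 - e))^2" by (simp add: power2_eq_square algebra_simps)
  show "v^2 + \<alpha> * w^2 - 2 * r * v * w \<le> p^2 + \<alpha> * q^2 - 2 * r * (1 - e)^2 * p * q"
    unfolding e1 e2 using a1 b2 b5 by linarith
  show "(1 - e)^2 * (p^2 + \<alpha> * q^2) - 2 * r * p * q \<le> v^2 + \<alpha> * w^2 - 2 * r * v * w"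
    unfolding e3 e2 e4 using a3 b4 b6 by linarith
qed

lemma sumP: "(\<Sum>k<M. (real k)^2 + (real (Suc k))^2) = real M * (2 * (real M)^2 + 1) / 3"
  by (induction M) (simp_all add: power2_eq_square algebra_simps add_divide_distrib)

lemma sumQ: "(\<Sum>k<M. real k * real (Suc k)) = (real M - 1) * real M * (real M + 1) / 3"
  by (induction M) (simp_all add: algebra_simps add_divide_distrib)

lemma sumP': "(\<Sum>k<M. (real k)^2 + (1 + real k)^2) = real M * (2 * (real M)^2 + 1) / 3"
  using sumP[of M] by simp
lemma sumQ': "(\<Sum>k<M. real k * (1 + real k)) = (real M - 1) * real M * (real M + 1) / 3"
  using sumQ[of M] by simp

lemma analytic:
  fixes \<rho> :: real and t :: "nat \<Rightarrow> real"
  assumes \<rho>0: "0 < \<rho>" and \<rho>1: "\<rho> < 1"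
    and tr: "\<And>M. M \<ge> 1 \<Longrightarrow> 0 < t M \<and> t M \<le> pi/2"
    and lim: "(\<lambda>M. real M * t M) \<longlonglongrightarrow> 0"
  shows "(\<lambda>M. (\<Sum>k<M. NN \<rho> (t M) k) / real M ^ 3) \<longlonglongrightarrow> 2 * (1 - \<rho>^2) / 3"
    and "(\<lambda>M. DD \<rho> (t M) M / real M ^ 2) \<longlonglongrightarrow> 1 - \<rho>^2"
proof -
  define e where "e M = (real M * t M)^2 / 6" for M
  define r where "r M = \<rho>^2 * cos (t M)" for M
  define Pf where "Pf M = real M * (2 * (real M)^2 + 1) / 3 / real M ^ 3" for M
  define Qf where "Qf M = (real M - 1) * real M * (real M + 1) / 3 / real M ^ 3" for M
  define D1 where "D1 M = (real M - 1)^2 / real M ^ 2" for M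
  define D2 where "D2 M = real M * (real M - 1) / real M ^ 2" for M
  have hP: "Pf \<longlonglongrightarrow> 2/3" unfolding Pf_def by real_asymp
  have hQ: "Qf \<longlonglongrightarrow> 1/3" unfolding Qf_def by real_asymp
  have hD1: "D1 \<longlonglongrightarrow> 1" unfolding D1_def by real_asymp
  have hD2: "D2 \<longlonglongrightarrow> 1" unfolding D2_def by real_asymp
  have he: "e \<longlonglongrightarrow> 0"
  proof -
    have "(\<lambda>M. (real M * t M)^2 / 6) \<longlonglongrightarrow> 0^2 / 6"
      by (intro tendsto_intros lim) simp_all
    then show ?thesis unfolding e_def by simp
  qed
  have ht: "t \<longlonglongrightarrow> 0"
  proof (rule tendsto_sandwich[of "\<lambda>_. 0" _ _ "\<lambda>M. real M * t M"])
    show "\<forall>\<^sub>F M in sequentially. 0 \<le> t M"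
      using eventually_ge_at_top[of "1::nat"] by eventually_elim (use tr in force)
    show "\<forall>\<^sub>F M in sequentially. t M \<le> real M * t M"
      using eventually_ge_at_top[of "1::nat"]
    proof eventually_elim
      case (elim M)
      then have "0 < t M" "1 \<le> real M" using tr by auto
      then show ?case using mult_right_mono[of 1 "real M" "t M"] by simp
    qed
  qed (auto intro: lim)
  have hr: "r \<longlonglongrightarrow> \<rho>^2"
  proof -
    have "(\<lambda>M. \<rho>^2 * cos (t M)) \<longlonglongrightarrow> \<rho>^2 * cos 0" by (intro tendsto_intros ht)
    then show ?thesis unfolding r_def by simp
  qed
  have evA: "\<forall>\<^sub>F M in sequentially. M \<ge> 1 \<and> real M * t M < 1"
  proof -
    have "\<forall>\<^sub>F M in sequentially. real M * t M < 1" using order_tendstoD(2)[OF lim, of 1] by simp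
    with eventually_ge_at_top[of "1::nat"] show ?thesis by eventually_elim simp
  qed
  have bounds: "\<forall>\<^sub>F M in sequentially.
      (1 - e M)^2 * Pf M - 2 * r M * Qf M \<le> (\<Sum>k<M. NN \<rho> (t M) k) / real M ^ 3 \<and>
      (\<Sum>k<M. NN \<rho> (t M) k) / real M ^ 3 \<le> Pf M - 2 * r M * (1 - e M)^2 * Qf M \<and>
      (1 - e M)^2 * (1 + \<rho>^2 * D1 M) - 2 * r M * D2 M \<le> DD \<rho> (t M) M / real M ^ 2 \<and>
      DD \<rho> (t M) M / real M ^ 2 \<le> 1 + \<rho>^2 * D1 M - 2 * r M * (1 - e M)^2 * D2 M"
    using evA
  proof eventually_elim
    case (elim M)
    define tt where "tt = t M"
    have M1: "M \<ge> 1" and Mt: "real M * tt < 1" using elim by (auto simp: tt_def)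
    have tt: "0 < tt" "tt \<le> pi/2" using tr[OF M1] by (auto simp: tt_def)
    have ttpi: "tt < pi" using tt pi_gt_zero by linarith
    have e0: "0 \<le> e M" by (simp add: e_def)
    have e1: "e M \<le> 1"
    proof -
      have "(real M * tt)^2 \<le> 1" using Mt tt by (simp add: power_le_one)
      then show ?thesis by (simp add: e_def tt_def)
    qed
    have r0: "0 \<le> r M" unfolding r_def tt_def[symmetric] using tt by (intro mult_nonneg_nonneg cos_ge_zero) auto
    have low: "real k * (1 - e M) \<le> Vs tt k" if k: "k \<le> M" for k
    proof -
      have kt: "real k * tt \<le> real M * tt" using k tt by (simp add: mult_right_mono)
      have kt0: "0 \<le> real k * tt" using tt by simp
      have "(real k * tt)^2 \<le> (real M * tt)^2" using kt kt0 by (simp add: power_mono)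
      then have "1 - e M \<le> 1 - (real k * tt)^2 / 6" by (simp add: e_def tt_def)
      then have "real k * (1 - e M) \<le> real k * (1 - (real k * tt)^2 / 6)" by (simp add: mult_left_mono)
      also have "\<dots> \<le> Vs tt k" using Vs_lower[OF tt(1) ttpi] kt Mt by simp
      finally show ?thesis .
    qed
    have up: "Vs tt k \<le> real k" for k using Vs_upper[OF tt(1) ttpi, of k] by simp
    have Mpos: "real M > 0" using M1 by simp
    have nb: "(1 - e M)^2 * ((real k)^2 + (real (Suc k))^2) - 2 * r M * (real k * real (Suc k)) \<le> NN \<rho> tt k
       \<and> NN \<rho> tt k \<le> ((real k)^2 + (real (Suc k))^2) - 2 * r M * (1 - e M)^2 * (real k * real (Suc k))"
      if k: "k < M" for k
    proof -
      have q: "Vs tt k ^ 2 + 1 * Vs tt (Suc k) ^ 2 - 2 * r M * Vs tt k * Vs tt (Suc k) = NN \<rho> tt k"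
        by (simp add: NN_def r_def tt_def algebra_simps)
      have kk: "k \<le> M" "Suc k \<le> M" using k by auto
      note qb = quad_bounds[where v="Vs tt k" and w="Vs tt (Suc k)" and p="real k" and q="real (Suc k)"
          and \<alpha>=1 and r="r M" and e="e M", OF e0 e1 r0 _ _ _ low[OF kk(1)] up low[OF kk(2)] up, unfolded q]
      show ?thesis using qb by (simp add: algebra_simps)
    qed
    have sN1: "(\<Sum>k<M. NN \<rho> tt k) \<le> real M * (2 * (real M)^2 + 1) / 3 - 2 * r M * (1 - e M)^2 * ((real M - 1) * real M * (real M + 1) / 3)"
    proof -
      have "(\<Sum>k<M. NN \<rho> tt k) \<le> (\<Sum>k<M. ((real k)^2 + (real (Suc k))^2) - 2 * r M * (1 - e M)^2 * (real k * real (Suc k)))"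
        using nb by (intro sum_mono) auto
      also have "\<dots> = real M * (2 * (real M)^2 + 1) / 3 - 2 * r M * (1 - e M)^2 * ((real M - 1) * real M * (real M + 1) / 3)"
        by (simp add: sum_subtractf sum_distrib_left[symmetric] sumP' sumQ')
      finally show ?thesis .
    qed
    have sN2: "(1 - e M)^2 * (real M * (2 * (real M)^2 + 1) / 3) - 2 * r M * ((real M - 1) * real M * (real M + 1) / 3) \<le> (\<Sum>k<M. NN \<rho> tt k)"
    proof -
      have "(1 - e M)^2 * (real M * (2 * (real M)^2 + 1) / 3) - 2 * r M * ((real M - 1) * real M * (real M + 1) / 3)
          = (\<Sum>k<M. (1 - e M)^2 * ((real k)^2 + (real (Suc k))^2) - 2 * r M * (real k * real (Suc k)))"
        by (simp add: sum_subtractf sum_distrib_left[symmetric] sumP' sumQ')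
      also have "\<dots> \<le> (\<Sum>k<M. NN \<rho> tt k)"
        using nb by (intro sum_mono) auto
      finally show ?thesis .
    qed
    obtain m where m: "M = Suc m" using M1 by (cases M) auto
    have rm: "real m = real M - 1" using m by simp
    have q: "Vs tt M ^ 2 + \<rho>^2 * Vs tt m ^ 2 - 2 * r M * Vs tt M * Vs tt m = DD \<rho> tt M"
      by (simp add: DD_def r_def tt_def m algebra_simps)
    have qb: "Vs tt M ^ 2 + \<rho>^2 * Vs tt m ^ 2 - 2 * r M * Vs tt M * Vs tt m \<le> (real M)^2 + \<rho>^2 * (real m)^2 - 2 * r M * (1 - e M)^2 * real M * real m"
       "(1 - e M)^2 * ((real M)^2 + \<rho>^2 * (real m)^2) - 2 * r M * real M * real m \<le> Vs tt M ^ 2 + \<rho>^2 * Vs tt m ^ 2 - 2 * r M * Vs tt M * Vs tt m"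
      using quad_bounds[where v="Vs tt M" and w="Vs tt m" and p="real M" and q="real m"
          and \<alpha>="\<rho>^2" and r="r M" and e="e M", OF e0 e1 r0 _ _ _ low up low up] m by auto
    have dd1: "DD \<rho> tt M / real M ^ 2 \<le> 1 + \<rho>^2 * D1 M - 2 * r M * (1 - e M)^2 * D2 M"
    proof -
      have "DD \<rho> tt M / real M ^ 2 \<le> ((real M)^2 + \<rho>^2 * (real m)^2 - 2 * r M * (1 - e M)^2 * real M * real m) / real M ^ 2"
        using qb(1) q Mpos by (simp add: divide_right_mono)
      also have "\<dots> = 1 + \<rho>^2 * D1 M - 2 * r M * (1 - e M)^2 * D2 M"
        using Mpos unfolding D1_def D2_def rm by (simp add: field_simps)
      finally show ?thesis .
    qed
    have dd2: "(1 - e M)^2 * (1 + \<rho>^2 * D1 M) - 2 * r M * D2 M \<le> DD \<rho> tt M / real M ^ 2"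
    proof -
      have "(1 - e M)^2 * (1 + \<rho>^2 * D1 M) - 2 * r M * D2 M = ((1 - e M)^2 * ((real M)^2 + \<rho>^2 * (real m)^2) - 2 * r M * real M * real m) / real M ^ 2"
        using Mpos unfolding D1_def D2_def rm by (simp add: field_simps)
      also have "\<dots> \<le> DD \<rho> tt M / real M ^ 2"
        using qb(2) q Mpos by (simp add: divide_right_mono)
      finally show ?thesis .
    qed
    have n1: "(\<Sum>k<M. NN \<rho> tt k) / real M ^ 3 \<le> Pf M - 2 * r M * (1 - e M)^2 * Qf M"
    proof -
      have "(\<Sum>k<M. NN \<rho> tt k) / real M ^ 3 \<le> (real M * (2 * (real M)^2 + 1) / 3 - 2 * r M * (1 - e M)^2 * ((real M - 1) * real M * (real M + 1) / 3)) / real M ^ 3"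
        using sN1 Mpos by (simp add: divide_right_mono)
      also have "\<dots> = Pf M - 2 * r M * (1 - e M)^2 * Qf M"
        unfolding Pf_def Qf_def by (simp add: diff_divide_distrib)
      finally show ?thesis .
    qed
    have n2: "(1 - e M)^2 * Pf M - 2 * r M * Qf M \<le> (\<Sum>k<M. NN \<rho> tt k) / real M ^ 3"
    proof -
      have "(1 - e M)^2 * Pf M - 2 * r M * Qf M = ((1 - e M)^2 * (real M * (2 * (real M)^2 + 1) / 3) - 2 * r M * ((real M - 1) * real M * (real M + 1) / 3)) / real M ^ 3"
        unfolding Pf_def Qf_def by (simp add: diff_divide_distrib)
      also have "\<dots> \<le> (\<Sum>k<M. NN \<rho> tt k) / real M ^ 3"
        using sN2 Mpos by (simp add: divide_right_mono)
      finally show ?thesis .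
    qed
    show ?case using n1 n2 dd1 dd2 by (simp add: tt_def)
  qed
  show "(\<lambda>M. (\<Sum>k<M. NN \<rho> (t M) k) / real M ^ 3) \<longlonglongrightarrow> 2 * (1 - \<rho>^2) / 3"
  proof (rule tendsto_sandwich[OF _ _ _ _])
    show "\<forall>\<^sub>F M in sequentially. (1 - e M)^2 * Pf M - 2 * r M * Qf M \<le> (\<Sum>k<M. NN \<rho> (t M) k) / real M ^ 3"
      using bounds by eventually_elim simp
    show "\<forall>\<^sub>F M in sequentially. (\<Sum>k<M. NN \<rho> (t M) k) / real M ^ 3 \<le> Pf M - 2 * r M * (1 - e M)^2 * Qf M"
      using bounds by eventually_elim simp
    have "(\<lambda>M. (1 - e M)^2 * Pf M - 2 * r M * Qf M) \<longlonglongrightarrow> (1 - 0)^2 * (2/3) - 2 * \<rho>^2 * (1/3)"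
      by (intro tendsto_intros he hP hr hQ)
    then show "(\<lambda>M. (1 - e M)^2 * Pf M - 2 * r M * Qf M) \<longlonglongrightarrow> 2 * (1 - \<rho>^2) / 3"
      by (rule tendsto_eq_rhs) (simp add: field_simps)
    have "(\<lambda>M. Pf M - 2 * r M * (1 - e M)^2 * Qf M) \<longlonglongrightarrow> 2/3 - 2 * \<rho>^2 * (1 - 0)^2 * (1/3)"
      by (intro tendsto_intros he hP hr hQ)
    then show "(\<lambda>M. Pf M - 2 * r M * (1 - e M)^2 * Qf M) \<longlonglongrightarrow> 2 * (1 - \<rho>^2) / 3"
      by (rule tendsto_eq_rhs) (simp add: field_simps)
  qed
  show "(\<lambda>M. DD \<rho> (t M) M / real M ^ 2) \<longlonglongrightarrow> 1 - \<rho>^2"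
  proof (rule tendsto_sandwich[OF _ _ _ _])
    show "\<forall>\<^sub>F M in sequentially. (1 - e M)^2 * (1 + \<rho>^2 * D1 M) - 2 * r M * D2 M \<le> DD \<rho> (t M) M / real M ^ 2"
      using bounds by eventually_elim simp
    show "\<forall>\<^sub>F M in sequentially. DD \<rho> (t M) M / real M ^ 2 \<le> 1 + \<rho>^2 * D1 M - 2 * r M * (1 - e M)^2 * D2 M"
      using bounds by eventually_elim simp
    have "(\<lambda>M. (1 - e M)^2 * (1 + \<rho>^2 * D1 M) - 2 * r M * D2 M) \<longlonglongrightarrow> (1 - 0)^2 * (1 + \<rho>^2 * 1) - 2 * \<rho>^2 * 1"
      by (intro tendsto_intros he hD1 hr hD2)
    then show "(\<lambda>M. (1 - e M)^2 * (1 + \<rho>^2 * D1 M) - 2 * r M * D2 M) \<longlonglongrightarrow> 1 - \<rho>^2"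
      by (rule tendsto_eq_rhs) (simp add: field_simps)
    have "(\<lambda>M. 1 + \<rho>^2 * D1 M - 2 * r M * (1 - e M)^2 * D2 M) \<longlonglongrightarrow> 1 + \<rho>^2 * 1 - 2 * \<rho>^2 * (1 - 0)^2 * 1"
      by (intro tendsto_intros he hD1 hr hD2)
    then show "(\<lambda>M. 1 + \<rho>^2 * D1 M - 2 * r M * (1 - e M)^2 * D2 M) \<longlonglongrightarrow> 1 - \<rho>^2"
      by (rule tendsto_eq_rhs) (simp add: field_simps)
  qed
qed


theorem mainTheorem11:
  fixes C :: "complex^2^2" and sq :: complex
    and \<omega> :: "nat \<Rightarrow> complex" and \<theta> :: "nat \<Rightarrow> real"
  assumes unitary: "unitary2 C"
    and sqrt: "sq\<^sup>2 = det C"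
    and nonzero: "C$1$1 * C$1$2 * C$2$1 * C$2$2 \<noteq> 0"
    and inB: "\<And>M. M \<ge> 1 \<Longrightarrow> \<omega> M \<in> B_in C"
    and theta_range: "\<And>M. M \<ge> 1 \<Longrightarrow> 0 < \<theta> M \<and> \<theta> M < pi"
    and theta_cos: "\<And>M. M \<ge> 1 \<Longrightarrow> complex_of_real (cos (\<theta> M)) = xfun C (\<omega> M)"
    and lim0: "(\<lambda>M. real M * min (\<theta> M) (pi - \<theta> M)) \<longlonglongrightarrow> 0"
  shows "(\<lambda>M. energy C sq M (\<omega> M) / real M) \<longlonglongrightarrow> 2 / 3"
proof -
  have ws: "wsetup C sq (\<omega> M) (\<theta> M)" if M: "M \<ge> 1" for M
  proof
    show "unitary2 C" "sq\<^sup>2 = det C" "C$1$1 * C$1$2 * C$2$1 * C$2$2 \<noteq> 0"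
      using unitary sqrt nonzero by auto
    show "cmod (\<omega> M) = 1" using inB[OF M] by (simp add: B_in_def)
    show "complex_of_real (cos (\<theta> M)) = xfun C (\<omega> M)" by (rule theta_cos[OF M])
    show "sin (\<theta> M) \<noteq> 0" using theta_range[OF M] sin_gt_zero[of "\<theta> M"] by auto
  qed
  define \<rho> where "\<rho> = cmod (C$1$1)"
  interpret W1: wsetup C sq "\<omega> 1" "\<theta> 1" by (rule ws) simp
  have \<rho>0: "0 < \<rho>" and \<rho>1: "\<rho> < 1" using W1.rho_pos W1.rho_lt1 by (auto simp: \<rho>_def W1.rho_def)
  define t where "t M = min (\<theta> M) (pi - \<theta> M)" for M
  have tr: "0 < t M \<and> t M \<le> pi/2" if "M \<ge> 1" for M
    using theta_range[OF that] by (auto simp: t_def min_def)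
  have lim: "(\<lambda>M. real M * t M) \<longlonglongrightarrow> 0" using lim0 by (simp add: t_def)
  note L = analytic[OF \<rho>0 \<rho>1 tr lim]
  have r2: "\<rho>^2 < 1" using \<rho>0 \<rho>1 by (simp add: abs_square_less_1)
  then have r0: "1 - \<rho>^2 \<noteq> 0" by simp
  have "(\<lambda>M. ((\<Sum>k<M. NN \<rho> (t M) k) / real M ^ 3) / (DD \<rho> (t M) M / real M ^ 2))
      \<longlonglongrightarrow> (2 * (1 - \<rho>^2) / 3) / (1 - \<rho>^2)"
    by (rule tendsto_divide[OF L r0])
  then have Q: "(\<lambda>M. ((\<Sum>k<M. NN \<rho> (t M) k) / real M ^ 3) / (DD \<rho> (t M) M / real M ^ 2)) \<longlonglongrightarrow> 2 / 3"
    by (rule tendsto_eq_rhs) (use r0 in \<open>simp add: field_simps\<close>)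
  have pos: "\<forall>\<^sub>F M in sequentially. DD \<rho> (t M) M / real M ^ 2 > 0"
    using order_tendstoD(1)[OF L(2), of 0] r2 by simp
  have ev: "\<forall>\<^sub>F M in sequentially. ((\<Sum>k<M. NN \<rho> (t M) k) / real M ^ 3) / (DD \<rho> (t M) M / real M ^ 2)
      = energy C sq M (\<omega> M) / real M"
    using pos eventually_ge_at_top[of "1::nat"]
  proof eventually_elim
    case (elim M)
    interpret W: wsetup C sq "\<omega> M" "\<theta> M" by (rule ws[OF elim(2)])
    have Mpos: "real M > 0" using elim(2) by simp
    have rr: "W.rho = \<rho>" by (simp add: W.rho_def \<rho>_def)
    have tt: "t M = \<theta> M \<or> t M = pi - \<theta> M" by (auto simp: t_def min_def)
    have NNe: "NN \<rho> (t M) k = W.Nq k" for k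
      using tt NN_reflect[of \<rho> "\<theta> M" k] by (auto simp: W.Nq_def NN_def rr)
    have DDe: "DD \<rho> (t M) M = W.Dq M"
      using tt DD_reflect[of \<rho> "\<theta> M" M] by (auto simp: W.Dq_def DD_def rr)
    have Dp: "W.Dq M > 0" using elim(1) Mpos DDe by (simp add: zero_less_divide_iff)
    have "energy C sq M (\<omega> M) = (\<Sum>k<M. W.Nq k) / W.Dq M"
      by (rule W.energy_eq) (use Mpos Dp in auto)
    then show ?case unfolding NNe DDe using Mpos Dp by (simp add: field_simps power3_eq_cube power2_eq_square)
  qed
  show ?thesis by (rule Lim_transform_eventually[OF Q ev])
qed

end
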